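(* Let $\mathcal{C}$ be a triangulated category with translation functor $\Sigma$. (1) Suppose $\rho$ assigns to each morphism $f$ of $\mathcal{C}$ a real number $\rho(f)\geq0$ such that (M1) $\rho(\Sigma f)=\rho(f)$; (M2) $\rho(f\oplus g)=\rho(f)+\rho(g)$; (M3) for every exact triangle $X\xrightarrow{f}Y\xrightarrow{g}Z\rightsquigarrow$, $\rho(f)+\rho(g)=\rho(\mathrm{id}_Y)$. Then the function on objects $X\mapsto\rho(\mathrm{id}_X)$ is nonnegative and satisfies (O1) $\rho(\Sigma X)=\rho(X)$; (O2) $\rho(X\oplus Y)=\rho(X)+\rho(Y)$; (O3) for every exact triangle $X\to Y\to Z\rightsquigarrow$, $\rho(Y)\leq\rho(X)+\rho(Z)$. (2) Conversely, if $\rho$ assigns to each object a real number $\rho(X)\geq0$ satisfying (O1), (O2), (O3), then the assignment $\rho(f:X\to Y)=\frac{\rho(X)+\rho(Y)-\rho(\operatorname{cone}(f))}{2}$ is a nonnegative function on morphisms satisfying (M1), (M2), (M3). *)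

theory Defs
  imports Complex_Main
begin

text \<open>A (small-or-large) category presented by a type of objects 'o and a type of
  morphisms 'm: every element of 'm is a morphism with source src f and target tgt f.
  cmp g f is the composite g after f (defined when tgt f = src g).\<close>

record ('o, 'm) tcat =
  src :: "'m \<Rightarrow> 'o"
  tgt :: "'m \<Rightarrow> 'o"
  cmp :: "'m \<Rightarrow> 'm \<Rightarrow> 'm"
  ident :: "'o \<Rightarrow> 'm"
  madd :: "'m \<Rightarrow> 'm \<Rightarrow> 'm"
  mzero :: "'o \<Rightarrow> 'o \<Rightarrow> 'm"
  mneg :: "'m \<Rightarrow> 'm"
  shift_o :: "'o \<Rightarrow> 'o"
  shift_m :: "'m \<Rightarrow> 'm"
  osum :: "'o \<Rightarrow> 'o \<Rightarrow> 'o"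
  in1 :: "'o \<Rightarrow> 'o \<Rightarrow> 'm"
  in2 :: "'o \<Rightarrow> 'o \<Rightarrow> 'm"
  pr1 :: "'o \<Rightarrow> 'o \<Rightarrow> 'm"
  pr2 :: "'o \<Rightarrow> 'o \<Rightarrow> 'm"
  exact_tri :: "'m \<Rightarrow> 'm \<Rightarrow> 'm \<Rightarrow> bool"

definition hom :: "('o, 'm) tcat \<Rightarrow> 'o \<Rightarrow> 'o \<Rightarrow> 'm set" where
  "hom C X Y = {f. src C f = X \<and> tgt C f = Y}"

definition is_iso :: "('o, 'm) tcat \<Rightarrow> 'm \<Rightarrow> bool" where
  "is_iso C f \<longleftrightarrow> (\<exists>g. g \<in> hom C (tgt C f) (src C f) \<and>
      cmp C g f = ident C (src C f) \<and> cmp C f g = ident C (tgt C f))"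

definition is_zero_obj :: "('o, 'm) tcat \<Rightarrow> 'o \<Rightarrow> bool" where
  "is_zero_obj C Z \<longleftrightarrow> ident C Z = mzero C Z Z"

definition msum :: "('o, 'm) tcat \<Rightarrow> 'm \<Rightarrow> 'm \<Rightarrow> 'm" where
  "msum C f g =
     madd C (cmp C (in1 C (tgt C f) (tgt C g)) (cmp C f (pr1 C (src C f) (src C g))))
            (cmp C (in2 C (tgt C f) (tgt C g)) (cmp C g (pr2 C (src C f) (src C g))))"

definition is_triangle :: "('o, 'm) tcat \<Rightarrow> 'm \<Rightarrow> 'm \<Rightarrow> 'm \<Rightarrow> bool" where
  "is_triangle C f g h \<longleftrightarrow>
     tgt C f = src C g \<and> tgt C g = src C h \<and> tgt C h = shift_o C (src C f)"

definition tri_morphism :: "('o, 'm) tcat \<Rightarrow> 'm \<Rightarrow> 'm \<Rightarrow> 'm \<Rightarrow> 'm \<Rightarrow> 'm \<Rightarrow> 'm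
    \<Rightarrow> 'm \<Rightarrow> 'm \<Rightarrow> 'm \<Rightarrow> bool" where
  "tri_morphism C f g h f' g' h' a b c \<longleftrightarrow>
     a \<in> hom C (src C f) (src C f') \<and> b \<in> hom C (tgt C f) (tgt C f') \<and>
     c \<in> hom C (tgt C g) (tgt C g') \<and>
     cmp C b f = cmp C f' a \<and> cmp C c g = cmp C g' b \<and>
     cmp C (shift_m C a) h = cmp C h' c"

locale triangulated_category =
  fixes C :: "('o, 'm) tcat"
  assumes
    src_ident: "src C (ident C X) = X"
  and tgt_ident: "tgt C (ident C X) = X"
  and src_cmp: "tgt C f = src C g \<Longrightarrow> src C (cmp C g f) = src C f"
  and tgt_cmp: "tgt C f = src C g \<Longrightarrow> tgt C (cmp C g f) = tgt C g"
  and ident_left: "cmp C (ident C (tgt C f)) f = f"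
  and ident_right: "cmp C f (ident C (src C f)) = f"
  and cmp_assoc: "tgt C f = src C g \<Longrightarrow> tgt C g = src C h \<Longrightarrow>
                  cmp C h (cmp C g f) = cmp C (cmp C h g) f"
  and madd_hom: "src C f = src C g \<Longrightarrow> tgt C f = tgt C g \<Longrightarrow>
                 src C (madd C f g) = src C f \<and> tgt C (madd C f g) = tgt C f"
  and mzero_hom: "mzero C X Y \<in> hom C X Y"
  and mneg_hom: "src C (mneg C f) = src C f \<and> tgt C (mneg C f) = tgt C f"
  and madd_assoc: "f \<in> hom C X Y \<Longrightarrow> g \<in> hom C X Y \<Longrightarrow> h \<in> hom C X Y \<Longrightarrow>
                   madd C (madd C f g) h = madd C f (madd C g h)"
  and madd_comm: "f \<in> hom C X Y \<Longrightarrow> g \<in> hom C X Y \<Longrightarrow> madd C f g = madd C g f"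
  and madd_zero: "madd C f (mzero C (src C f) (tgt C f)) = f"
  and madd_neg: "madd C f (mneg C f) = mzero C (src C f) (tgt C f)"
  and cmp_madd_left: "g \<in> hom C Y Z \<Longrightarrow> g' \<in> hom C Y Z \<Longrightarrow> f \<in> hom C X Y \<Longrightarrow>
                      cmp C (madd C g g') f = madd C (cmp C g f) (cmp C g' f)"
  and cmp_madd_right: "g \<in> hom C Y Z \<Longrightarrow> f \<in> hom C X Y \<Longrightarrow> f' \<in> hom C X Y \<Longrightarrow>
                      cmp C g (madd C f f') = madd C (cmp C g f) (cmp C g f')"
  and zero_obj_ex: "\<exists>Z. is_zero_obj C Z"
  and in1_hom: "in1 C X Y \<in> hom C X (osum C X Y)"
  and in2_hom: "in2 C X Y \<in> hom C Y (osum C X Y)"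
  and pr1_hom: "pr1 C X Y \<in> hom C (osum C X Y) X"
  and pr2_hom: "pr2 C X Y \<in> hom C (osum C X Y) Y"
  and pr1_in1: "cmp C (pr1 C X Y) (in1 C X Y) = ident C X"
  and pr2_in2: "cmp C (pr2 C X Y) (in2 C X Y) = ident C Y"
  and pr1_in2: "cmp C (pr1 C X Y) (in2 C X Y) = mzero C Y X"
  and pr2_in1: "cmp C (pr2 C X Y) (in1 C X Y) = mzero C X Y"
  and biprod_id: "madd C (cmp C (in1 C X Y) (pr1 C X Y)) (cmp C (in2 C X Y) (pr2 C X Y))
                  = ident C (osum C X Y)"
  and shift_hom: "f \<in> hom C X Y \<Longrightarrow> shift_m C f \<in> hom C (shift_o C X) (shift_o C Y)"
  and shift_ident: "shift_m C (ident C X) = ident C (shift_o C X)"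
  and shift_cmp: "tgt C f = src C g \<Longrightarrow>
                  shift_m C (cmp C g f) = cmp C (shift_m C g) (shift_m C f)"
  and shift_madd: "f \<in> hom C X Y \<Longrightarrow> g \<in> hom C X Y \<Longrightarrow>
                   shift_m C (madd C f g) = madd C (shift_m C f) (shift_m C g)"
  and shift_fully_faithful: "h \<in> hom C (shift_o C X) (shift_o C Y) \<Longrightarrow>
                   \<exists>!f. f \<in> hom C X Y \<and> shift_m C f = h"
  and shift_ess_surj: "\<exists>X f. f \<in> hom C (shift_o C X) Y \<and> is_iso C f"
  and exact_triangle: "exact_tri C f g h \<Longrightarrow> is_triangle C f g h"
  and TR1_ident: "is_zero_obj C Z \<Longrightarrow>
                  exact_tri C (ident C X) (mzero C X Z) (mzero C Z (shift_o C X))"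
  and TR1_ex: "\<exists>g h. exact_tri C f g h"
  and TR1_iso: "exact_tri C f g h \<Longrightarrow> is_triangle C f' g' h' \<Longrightarrow>
                tri_morphism C f g h f' g' h' a b c \<Longrightarrow>
                is_iso C a \<Longrightarrow> is_iso C b \<Longrightarrow> is_iso C c \<Longrightarrow> exact_tri C f' g' h'"
  and TR2: "is_triangle C f g h \<Longrightarrow>
            exact_tri C f g h \<longleftrightarrow> exact_tri C g h (mneg C (shift_m C f))"
  and TR3: "exact_tri C f g h \<Longrightarrow> exact_tri C f' g' h' \<Longrightarrow>
            a \<in> hom C (src C f) (src C f') \<Longrightarrow> b \<in> hom C (tgt C f) (tgt C f') \<Longrightarrow>
            cmp C b f = cmp C f' a \<Longrightarrow>
            \<exists>c. tri_morphism C f g h f' g' h' a b c"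
  and TR4: "tgt C f = src C g \<Longrightarrow>
            exact_tri C f u u' \<Longrightarrow> exact_tri C g v v' \<Longrightarrow> exact_tri C (cmp C g f) w w' \<Longrightarrow>
            \<exists>a b. a \<in> hom C (tgt C u) (tgt C w) \<and> b \<in> hom C (tgt C w) (tgt C v) \<and>
              exact_tri C a b (cmp C (shift_m C u) v') \<and>
              cmp C a u = cmp C w g \<and> cmp C w' a = u' \<and>
              cmp C b w = v \<and> cmp C v' b = cmp C (shift_m C f) w'"

definition morphism_rho :: "('o, 'm) tcat \<Rightarrow> ('m \<Rightarrow> real) \<Rightarrow> bool" where
  "morphism_rho C \<rho> \<longleftrightarrow>
     (\<forall>f. 0 \<le> \<rho> f) \<and>
     (\<forall>f. \<rho> (shift_m C f) = \<rho> f) \<and>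
     (\<forall>f g. \<rho> (msum C f g) = \<rho> f + \<rho> g) \<and>
     (\<forall>f g h. exact_tri C f g h \<longrightarrow> \<rho> f + \<rho> g = \<rho> (ident C (tgt C f)))"

definition object_rho :: "('o, 'm) tcat \<Rightarrow> ('o \<Rightarrow> real) \<Rightarrow> bool" where
  "object_rho C \<rho> \<longleftrightarrow>
     (\<forall>X. 0 \<le> \<rho> X) \<and>
     (\<forall>X. \<rho> (shift_o C X) = \<rho> X) \<and>
     (\<forall>X Y. \<rho> (osum C X Y) = \<rho> X + \<rho> Y) \<and>
     (\<forall>f g h. exact_tri C f g h \<longrightarrow> \<rho> (tgt C f) \<le> \<rho> (src C f) + \<rho> (tgt C g))"

end

theory Submission imports Defs begin

context triangulated_category begin

abbreviation cp (infixl "\<cdot>" 70) where "g \<cdot> f \<equiv> cmp C g f"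
abbreviation ad (infixl "\<oplus>" 65) where "f \<oplus> g \<equiv> madd C f g"

lemma hom_iff[simp]: "f \<in> hom C X Y \<longleftrightarrow> src C f = X \<and> tgt C f = Y"
  by (simp add: hom_def)

lemma st_simps[simp]:
  "src C (mzero C X Y) = X" "tgt C (mzero C X Y) = Y"
  "src C (mneg C f) = src C f" "tgt C (mneg C f) = tgt C f"
  "src C (in1 C X Y) = X" "tgt C (in1 C X Y) = osum C X Y"
  "src C (in2 C X Y) = Y" "tgt C (in2 C X Y) = osum C X Y"
  "src C (pr1 C X Y) = osum C X Y" "tgt C (pr1 C X Y) = X"
  "src C (pr2 C X Y) = osum C X Y" "tgt C (pr2 C X Y) = Y"
  "src C (shift_m C f) = shift_o C (src C f)" "tgt C (shift_m C f) = shift_o C (tgt C f)"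
  "src C (ident C X) = X" "tgt C (ident C X) = X"
  using mzero_hom[of X Y] mneg_hom[of f] in1_hom[of X Y] in2_hom[of X Y] pr1_hom[of X Y]
    pr2_hom[of X Y] shift_hom[of f "src C f" "tgt C f"] src_ident tgt_ident by auto

lemma cmp_st[simp]:
  "tgt C f = src C g \<Longrightarrow> src C (g \<cdot> f) = src C f"
  "tgt C f = src C g \<Longrightarrow> tgt C (g \<cdot> f) = tgt C g"
  using src_cmp tgt_cmp by auto

lemma madd_st[simp]:
  "src C f = src C g \<Longrightarrow> tgt C f = tgt C g \<Longrightarrow> src C (f \<oplus> g) = src C f"
  "src C f = src C g \<Longrightarrow> tgt C f = tgt C g \<Longrightarrow> tgt C (f \<oplus> g) = tgt C f"
  using madd_hom by auto

lemma idl[simp]: "tgt C f = Y \<Longrightarrow> ident C Y \<cdot> f = f" using ident_left by blast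
lemma idr[simp]: "src C f = X \<Longrightarrow> f \<cdot> ident C X = f" using ident_right by blast

lemma assoc: "tgt C f = src C g \<Longrightarrow> tgt C g = src C h \<Longrightarrow> h \<cdot> (g \<cdot> f) = (h \<cdot> g) \<cdot> f"
  by (rule cmp_assoc)

lemma acomm: "src C f = src C g \<Longrightarrow> tgt C f = tgt C g \<Longrightarrow> f \<oplus> g = g \<oplus> f"
  using madd_comm[of f "src C f" "tgt C f" g] by simp

lemma aassoc: "src C f = src C g \<Longrightarrow> tgt C f = tgt C g \<Longrightarrow> src C h = src C g \<Longrightarrow> tgt C h = tgt C g
   \<Longrightarrow> (f \<oplus> g) \<oplus> h = f \<oplus> (g \<oplus> h)"
  using madd_assoc[of f "src C f" "tgt C f" g h] by simp

lemma azero[simp]: "src C f = X \<Longrightarrow> tgt C f = Y \<Longrightarrow> f \<oplus> mzero C X Y = f"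
  using madd_zero by blast

lemma zeroa[simp]: "src C f = X \<Longrightarrow> tgt C f = Y \<Longrightarrow> mzero C X Y \<oplus> f = f"
  using madd_zero[of f] acomm[of f "mzero C X Y"] by simp

lemma aneg[simp]: "src C f = X \<Longrightarrow> tgt C f = Y \<Longrightarrow> f \<oplus> mneg C f = mzero C X Y"
  using madd_neg by blast

lemma nega[simp]: "src C f = X \<Longrightarrow> tgt C f = Y \<Longrightarrow> mneg C f \<oplus> f = mzero C X Y"
  using madd_neg[of f] acomm[of f "mneg C f"] by simp

lemma cadd_l: "src C g = src C g' \<Longrightarrow> tgt C g = tgt C g' \<Longrightarrow> tgt C f = src C g \<Longrightarrow>
   (g \<oplus> g') \<cdot> f = g \<cdot> f \<oplus> g' \<cdot> f"
  using cmp_madd_left[of g "src C g" "tgt C g" g' f "src C f"] by simp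

lemma cadd_r: "src C f = src C f' \<Longrightarrow> tgt C f = tgt C f' \<Longrightarrow> tgt C f = src C g \<Longrightarrow>
   g \<cdot> (f \<oplus> f') = g \<cdot> f \<oplus> g \<cdot> f'"
  using cmp_madd_right[of g "src C g" "tgt C g" f "src C f" f'] by simp

lemma idem_zero: assumes "z \<oplus> z = z" shows "z = mzero C (src C z) (tgt C z)"
proof -
  have "z = z \<oplus> (z \<oplus> mneg C z)" by simp
  also have "\<dots> = (z \<oplus> z) \<oplus> mneg C z" by (simp add: aassoc)
  also have "\<dots> = mzero C (src C z) (tgt C z)" using assms by simp
  finally show ?thesis .
qed

lemma czero_r[simp]: "src C g = Y \<Longrightarrow> g \<cdot> mzero C X Y = mzero C X (tgt C g)"
proof -
  assume a: "src C g = Y"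
  have "g \<cdot> mzero C X Y = g \<cdot> (mzero C X Y \<oplus> mzero C X Y)" by simp
  also have "\<dots> = g \<cdot> mzero C X Y \<oplus> g \<cdot> mzero C X Y" using a by (intro cadd_r) simp_all
  finally have e: "g \<cdot> mzero C X Y = g \<cdot> mzero C X Y \<oplus> g \<cdot> mzero C X Y" .
  from idem_zero[OF e[symmetric]] show ?thesis using a by simp
qed

lemma czero_l[simp]: "tgt C f = Y \<Longrightarrow> mzero C Y Z \<cdot> f = mzero C (src C f) Z"
proof -
  assume a: "tgt C f = Y"
  have "mzero C Y Z \<cdot> f = (mzero C Y Z \<oplus> mzero C Y Z) \<cdot> f" by simp
  also have "\<dots> = mzero C Y Z \<cdot> f \<oplus> mzero C Y Z \<cdot> f" using a by (intro cadd_l) simp_all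
  finally have e: "mzero C Y Z \<cdot> f = mzero C Y Z \<cdot> f \<oplus> mzero C Y Z \<cdot> f" .
  from idem_zero[OF e[symmetric]] show ?thesis using a by simp
qed

lemma neg_unique: assumes "src C b = src C a" "tgt C b = tgt C a"
  "a \<oplus> b = mzero C (src C a) (tgt C a)" shows "b = mneg C a"
proof -
  have "b = b \<oplus> (a \<oplus> mneg C a)" using assms by simp
  also have "\<dots> = (b \<oplus> a) \<oplus> mneg C a" using assms by (simp add: aassoc)
  also have "\<dots> = (a \<oplus> b) \<oplus> mneg C a" using assms by (simp add: acomm)
  also have "\<dots> = mneg C a" using assms by simp
  finally show ?thesis .
qed

lemma negneg[simp]: "mneg C (mneg C f) = f"
  using neg_unique[of f "mneg C f"] by simp

lemma negzero[simp]: "mneg C (mzero C X Y) = mzero C X Y"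
  using neg_unique[of "mzero C X Y" "mzero C X Y"] by simp

lemma cneg_r: "tgt C f = src C g \<Longrightarrow> g \<cdot> mneg C f = mneg C (g \<cdot> f)"
  apply (rule neg_unique)
  apply (simp_all add: cadd_r[symmetric])
  done

lemma cneg_l: "tgt C f = src C g \<Longrightarrow> mneg C g \<cdot> f = mneg C (g \<cdot> f)"
  apply (rule neg_unique)
  apply (simp_all add: cadd_l[symmetric])
  done

lemma sh_add: "src C f = src C g \<Longrightarrow> tgt C f = tgt C g \<Longrightarrow>
   shift_m C (f \<oplus> g) = shift_m C f \<oplus> shift_m C g"
  using shift_madd[of f "src C f" "tgt C f" g] by simp

lemma sh_zero[simp]: "shift_m C (mzero C X Y) = mzero C (shift_o C X) (shift_o C Y)"
proof -
  have "shift_m C (mzero C X Y) \<oplus> shift_m C (mzero C X Y) = shift_m C (mzero C X Y)"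
    using sh_add[of "mzero C X Y" "mzero C X Y", symmetric] by simp
  from idem_zero[OF this] show ?thesis by simp
qed

lemma sh_neg[simp]: "shift_m C (mneg C f) = mneg C (shift_m C f)"
  apply (rule neg_unique)
  apply (simp_all add: sh_add[symmetric])
  done

lemma sh_cmp: "tgt C f = src C g \<Longrightarrow> shift_m C (g \<cdot> f) = shift_m C g \<cdot> shift_m C f"
  by (rule shift_cmp)

lemma sh_id[simp]: "shift_m C (ident C X) = ident C (shift_o C X)" by (rule shift_ident)

lemma zobj_src: "is_zero_obj C Z \<Longrightarrow> src C f = Z \<Longrightarrow> f = mzero C Z (tgt C f)"
  unfolding is_zero_obj_def
  by (metis czero_r idr)

lemma zobj_tgt: "is_zero_obj C Z \<Longrightarrow> tgt C f = Z \<Longrightarrow> f = mzero C (src C f) Z"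
  unfolding is_zero_obj_def
  by (metis czero_l idl)

lemma zobj_shift: "is_zero_obj C Z \<Longrightarrow> is_zero_obj C (shift_o C Z)"
  unfolding is_zero_obj_def by (metis sh_id sh_zero)

lemma zobj_osum: assumes "is_zero_obj C Z" shows "is_zero_obj C (osum C Z Z)"
proof -
  have "in1 C Z Z = mzero C Z (osum C Z Z)" using zobj_src[OF assms, of "in1 C Z Z"] by simp
  moreover have "in2 C Z Z = mzero C Z (osum C Z Z)" using zobj_src[OF assms, of "in2 C Z Z"] by simp
  ultimately show ?thesis using biprod_id[of Z Z] unfolding is_zero_obj_def by simp
qed

lemma iso_id: "is_iso C (ident C X)"
  unfolding is_iso_def by (rule exI[of _ "ident C X"]) simp

lemma iso_negid: "is_iso C (mneg C (ident C X))"
  unfolding is_iso_def by (rule exI[of _ "mneg C (ident C X)"]) (simp add: cneg_l cneg_r)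


lemma ex_tri: assumes "exact_tri C f g h"
  shows "tgt C f = src C g" "tgt C g = src C h" "tgt C h = shift_o C (src C f)"
  using exact_triangle[OF assms] unfolding is_triangle_def by auto

lemma rot: assumes "exact_tri C f g h" shows "exact_tri C g h (mneg C (shift_m C f))"
  using TR2[OF exact_triangle[OF assms]] assms by blast

lemma flip: assumes e: "exact_tri C p q r" shows "exact_tri C (mneg C p) (mneg C q) r"
proof -
  note t = ex_tri[OF e]
  show ?thesis
  proof (rule TR1_iso[OF e _ _ iso_id iso_negid iso_id])
    show "is_triangle C (mneg C p) (mneg C q) r" using t unfolding is_triangle_def by simp
    show "tri_morphism C p q r (mneg C p) (mneg C q) r (ident C (src C p))
       (mneg C (ident C (tgt C p))) (ident C (tgt C q))"
      unfolding tri_morphism_def using t apply (intro conjI)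
      apply simp
      apply simp
      apply simp
      apply (simp add: cneg_l)
      apply (simp add: cneg_l cneg_r)
      apply simp
      done
  qed
qed

lemma zid: assumes z: "is_zero_obj C Z0"
  shows "exact_tri C (mzero C Z0 A) (ident C A) (mzero C A (shift_o C Z0))"
proof -
  have tr: "is_triangle C (mzero C Z0 A) (ident C A) (mzero C A (shift_o C Z0))"
    unfolding is_triangle_def by simp
  have "exact_tri C (ident C A) (mzero C A (shift_o C Z0)) (mzero C (shift_o C Z0) (shift_o C A))"
    using TR1_ident[OF zobj_shift[OF z]] .
  then show ?thesis using TR2[OF tr] by simp
qed

lemma coker: assumes e: "exact_tri C f g h" and x: "src C x = tgt C f"
  and x0: "x \<cdot> f = mzero C (src C f) (tgt C x)"
  shows "\<exists>y. src C y = tgt C g \<and> tgt C y = tgt C x \<and> x = y \<cdot> g"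
proof -
  obtain Z0 where z: "is_zero_obj C Z0" using zero_obj_ex by blast
  note t = ex_tri[OF e]
  have h1: "mzero C (src C f) Z0 \<in> hom C (src C f) (src C (mzero C Z0 (tgt C x)))" by simp
  have h2: "x \<in> hom C (tgt C f) (tgt C (mzero C Z0 (tgt C x)))" using x by simp
  have h3: "cmp C x f = cmp C (mzero C Z0 (tgt C x)) (mzero C (src C f) Z0)"
    using x0 by simp
  obtain c where c: "tri_morphism C f g h (mzero C Z0 (tgt C x)) (ident C (tgt C x))
     (mzero C (tgt C x) (shift_o C Z0)) (mzero C (src C f) Z0) x c"
    using TR3[OF e zid[OF z] h1 h2 h3] by blast
  then have "c \<in> hom C (tgt C g) (tgt C x)" "c \<cdot> g = ident C (tgt C x) \<cdot> x"
    unfolding tri_morphism_def by auto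
  then show ?thesis by auto
qed

lemma iso_sym: "is_iso C c \<Longrightarrow> \<exists>d. is_iso C d \<and> src C d = tgt C c \<and> tgt C d = src C c"
  unfolding is_iso_def by (metis hom_iff)

lemma orho: assumes "object_rho C \<rho>"
  shows "\<And>X. 0 \<le> \<rho> X" "\<And>X. \<rho> (shift_o C X) = \<rho> X" "\<And>X Y. \<rho> (osum C X Y) = \<rho> X + \<rho> Y"
   "\<And>f g h. exact_tri C f g h \<Longrightarrow> \<rho> (tgt C f) \<le> \<rho> (src C f) + \<rho> (tgt C g)"
  using assms unfolding object_rho_def by blast+

lemma rho_zero: assumes r: "object_rho C \<rho>" and z: "is_zero_obj C Z" shows "\<rho> Z = 0"
proof -
  have gen: "\<rho> Z' \<le> 2 * \<rho> X" if "is_zero_obj C Z'" for Z' X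
  proof -
    have "exact_tri C (mzero C X Z') (mzero C Z' (shift_o C X)) (mneg C (shift_m C (ident C X)))"
      using rot[OF TR1_ident[OF that, of X]] .
    from orho(4)[OF r this] show ?thesis using orho(2)[OF r] by simp
  qed
  have "\<rho> (osum C (osum C Z Z) (osum C Z Z)) \<le> 2 * \<rho> Z"
    using gen[OF zobj_osum[OF zobj_osum[OF z]]] .
  then show ?thesis using orho(1,3)[OF r] by (smt (verit))
qed

lemma cone_le: assumes r: "object_rho C \<rho>" and e1: "exact_tri C f u u'" and e2: "exact_tri C f w w'"
  shows "\<rho> (tgt C w) \<le> \<rho> (tgt C u)"
proof -
  obtain Z where z: "is_zero_obj C Z" using zero_obj_ex by blast
  have e3: "exact_tri C (ident C (tgt C f) \<cdot> f) w w'" using e2 by simp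
  obtain a b where ab: "a \<in> hom C (tgt C u) (tgt C w)" "b \<in> hom C (tgt C w) (tgt C (mzero C (tgt C f) Z))"
     "exact_tri C a b (cmp C (shift_m C u) (mzero C Z (shift_o C (tgt C f))))"
    using TR4[OF _ e1 TR1_ident[OF z, of "tgt C f"] e3] by auto
  from orho(4)[OF r ab(3)] ab(1,2) rho_zero[OF r z] show ?thesis by simp
qed

lemma cone_eq: assumes r: "object_rho C \<rho>" and e1: "exact_tri C f u u'" and e2: "exact_tri C f w w'"
  shows "\<rho> (tgt C w) = \<rho> (tgt C u)"
  using cone_le[OF r e1 e2] cone_le[OF r e2 e1] by simp

lemma iso_le: assumes r: "object_rho C \<rho>" and c: "is_iso C c" shows "\<rho> (tgt C c) \<le> \<rho> (src C c)"
proof -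
  obtain Z where z: "is_zero_obj C Z" using zero_obj_ex by blast
  define S where "S = src C c"
  define W where "W = tgt C c"
  have e: "exact_tri C (ident C S) (mzero C S Z) (mzero C Z (shift_o C S))" using TR1_ident[OF z] .
  have e': "exact_tri C c (mzero C W Z) (mzero C Z (shift_o C S))"
  proof (rule TR1_iso[OF e _ _ iso_id c iso_id])
    show "is_triangle C c (mzero C W Z) (mzero C Z (shift_o C S))"
      unfolding is_triangle_def S_def W_def by simp
    show "tri_morphism C (ident C S) (mzero C S Z) (mzero C Z (shift_o C S)) c (mzero C W Z)
     (mzero C Z (shift_o C S)) (ident C S) c (ident C Z)"
      unfolding tri_morphism_def S_def W_def by simp
  qed
  from orho(4)[OF r e'] rho_zero[OF r z] show ?thesis unfolding S_def W_def by simp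
qed

lemma iso_eq: assumes r: "object_rho C \<rho>" and c: "is_iso C c" shows "\<rho> (tgt C c) = \<rho> (src C c)"
  using iso_le[OF r c] iso_sym[OF c] iso_le[OF r] by fastforce


lemma part1: assumes m: "morphism_rho C \<rho>" shows "object_rho C (\<lambda>X. \<rho> (ident C X))"
proof -
  have nn: "\<And>f. 0 \<le> \<rho> f" and m1: "\<And>f. \<rho> (shift_m C f) = \<rho> f"
    and m2: "\<And>f g. \<rho> (msum C f g) = \<rho> f + \<rho> g"
    and m3: "\<And>f g h. exact_tri C f g h \<Longrightarrow> \<rho> f + \<rho> g = \<rho> (ident C (tgt C f))"
    using m unfolding morphism_rho_def by blast+
  have o1: "\<rho> (ident C (shift_o C X)) = \<rho> (ident C X)" for X
    using m1[of "ident C X"] by simp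
  have "msum C (ident C X) (ident C Y) = ident C (osum C X Y)" for X Y
    unfolding msum_def by (simp add: biprod_id)
  then have o2: "\<rho> (ident C (osum C X Y)) = \<rho> (ident C X) + \<rho> (ident C Y)" for X Y
    using m2 by metis
  have o3: "\<rho> (ident C (tgt C f)) \<le> \<rho> (ident C (src C f)) + \<rho> (ident C (tgt C g))"
    if e: "exact_tri C f g h" for f g h
  proof -
    note t = ex_tri[OF e]
    have e1: "exact_tri C g h (mneg C (shift_m C f))" using rot[OF e] .
    have e3: "exact_tri C (mneg C h) (shift_m C f) (mneg C (shift_m C g))"
      using flip[OF rot[OF e1]] by simp
    have a: "\<rho> f + \<rho> g = \<rho> (ident C (tgt C f))" using m3[OF e] .
    have b: "\<rho> g + \<rho> h = \<rho> (ident C (tgt C g))" using m3[OF e1] .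
    have c: "\<rho> (mneg C h) + \<rho> (shift_m C f) = \<rho> (ident C (src C f))"
      using m3[OF e3] t o1 by simp
    show ?thesis using a b c m1[of f] nn[of h] nn[of "mneg C h"] by linarith
  qed
  show ?thesis unfolding object_rho_def using nn o1 o2 o3 by blast
qed


lemma assoc_r: "tgt C f = src C g \<Longrightarrow> tgt C g = src C h \<Longrightarrow> (h \<cdot> g) \<cdot> f = h \<cdot> (g \<cdot> f)"
  by (simp add: cmp_assoc)

lemma nil_inv: assumes s: "src C N = S" "tgt C N = S" and nn: "N \<cdot> N = mzero C S S"
  shows "(ident C S \<oplus> mneg C N) \<cdot> (ident C S \<oplus> N) = ident C S"
    "(ident C S \<oplus> N) \<cdot> (ident C S \<oplus> mneg C N) = ident C S"
proof -
  have nn': "mneg C N \<cdot> N = mzero C S S" "N \<cdot> mneg C N = mzero C S S"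
    using nn s by (simp_all add: cneg_l cneg_r)
  have "(ident C S \<oplus> mneg C N) \<cdot> (ident C S \<oplus> N)
      = ident C S \<cdot> (ident C S \<oplus> N) \<oplus> mneg C N \<cdot> (ident C S \<oplus> N)"
    using s by (intro cadd_l) simp_all
  also have "\<dots> = (ident C S \<oplus> N) \<oplus> (mneg C N \<cdot> ident C S \<oplus> mneg C N \<cdot> N)"
    using s by (subst cadd_r) simp_all
  also have "\<dots> = (ident C S \<oplus> N) \<oplus> mneg C N"
    using s nn' by simp
  also have "\<dots> = ident C S" using s by (simp add: aassoc)
  finally show "(ident C S \<oplus> mneg C N) \<cdot> (ident C S \<oplus> N) = ident C S" .
  have "(ident C S \<oplus> N) \<cdot> (ident C S \<oplus> mneg C N)
      = ident C S \<cdot> (ident C S \<oplus> mneg C N) \<oplus> N \<cdot> (ident C S \<oplus> mneg C N)"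
    using s by (intro cadd_l) simp_all
  also have "\<dots> = (ident C S \<oplus> mneg C N) \<oplus> (N \<cdot> ident C S \<oplus> N \<cdot> mneg C N)"
    using s by (subst cadd_r) simp_all
  also have "\<dots> = (ident C S \<oplus> mneg C N) \<oplus> N"
    using s nn' by simp
  also have "\<dots> = ident C S" using s by (simp add: aassoc)
  finally show "(ident C S \<oplus> N) \<cdot> (ident C S \<oplus> mneg C N) = ident C S" .
qed

lemma unip: assumes s: "src C x = S" "tgt C x = S"
  and nn: "(x \<oplus> mneg C (ident C S)) \<cdot> (x \<oplus> mneg C (ident C S)) = mzero C S S"
  shows "\<exists>y. src C y = S \<and> tgt C y = S \<and> y \<cdot> x = ident C S \<and> x \<cdot> y = ident C S"
proof -
  define N where "N = x \<oplus> mneg C (ident C S)"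
  have sN: "src C N = S" "tgt C N = S" using s unfolding N_def by simp_all
  have "ident C S \<oplus> N = (ident C S \<oplus> x) \<oplus> mneg C (ident C S)"
    unfolding N_def using s by (simp add: aassoc)
  also have "\<dots> = (x \<oplus> ident C S) \<oplus> mneg C (ident C S)" using s by (simp add: acomm)
  also have "\<dots> = x" using s by (simp add: aassoc)
  finally have x: "x = ident C S \<oplus> N" by simp
  show ?thesis
    apply (rule exI[of _ "ident C S \<oplus> mneg C N"])
    using nil_inv[OF sN nn[folded N_def]] sN x by simp
qed

lemma pi_r[simp]:
  "tgt C x = X \<Longrightarrow> pr1 C X Y \<cdot> (in1 C X Y \<cdot> x) = x"
  "tgt C x = Y \<Longrightarrow> pr1 C X Y \<cdot> (in2 C X Y \<cdot> x) = mzero C (src C x) X"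
  "tgt C x = X \<Longrightarrow> pr2 C X Y \<cdot> (in1 C X Y \<cdot> x) = mzero C (src C x) Y"
  "tgt C x = Y \<Longrightarrow> pr2 C X Y \<cdot> (in2 C X Y \<cdot> x) = x"
  by (simp_all add: cmp_assoc pr1_in1 pr1_in2 pr2_in1 pr2_in2)

lemma pi_base[simp]:
  "pr1 C X Y \<cdot> in1 C X Y = ident C X" "pr2 C X Y \<cdot> in2 C X Y = ident C Y"
  "pr1 C X Y \<cdot> in2 C X Y = mzero C Y X" "pr2 C X Y \<cdot> in1 C X Y = mzero C X Y"
  by (simp_all add: pr1_in1 pr1_in2 pr2_in1 pr2_in2)

lemma spi_r[simp]:
  "tgt C x = shift_o C X \<Longrightarrow> shift_m C (pr1 C X Y) \<cdot> (shift_m C (in1 C X Y) \<cdot> x) = x"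
  "tgt C x = shift_o C Y \<Longrightarrow> shift_m C (pr1 C X Y) \<cdot> (shift_m C (in2 C X Y) \<cdot> x) = mzero C (src C x) (shift_o C X)"
  "tgt C x = shift_o C X \<Longrightarrow> shift_m C (pr2 C X Y) \<cdot> (shift_m C (in1 C X Y) \<cdot> x) = mzero C (src C x) (shift_o C Y)"
  "tgt C x = shift_o C Y \<Longrightarrow> shift_m C (pr2 C X Y) \<cdot> (shift_m C (in2 C X Y) \<cdot> x) = x"
  by (simp_all add: cmp_assoc sh_cmp[symmetric])

lemma msum_st[simp]: "src C (msum C f g) = osum C (src C f) (src C g)"
   "tgt C (msum C f g) = osum C (tgt C f) (tgt C g)"
  unfolding msum_def by simp_all


lemma msum_in: 
  "msum C f g \<cdot> in1 C (src C f) (src C g) = in1 C (tgt C f) (tgt C g) \<cdot> f"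
  "msum C f g \<cdot> in2 C (src C f) (src C g) = in2 C (tgt C f) (tgt C g) \<cdot> g"
  "pr1 C (tgt C f) (tgt C g) \<cdot> msum C f g = f \<cdot> pr1 C (src C f) (src C g)"
  "pr2 C (tgt C f) (tgt C g) \<cdot> msum C f g = g \<cdot> pr2 C (src C f) (src C g)"
  unfolding msum_def by (simp_all add: cadd_l cadd_r assoc_r)


lemma sum_cone:
  assumes e1: "exact_tri C f u u'" and e2: "exact_tri C g v v'"
    and e3': "exact_tri C (msum C f g) w w'"
  shows "\<exists>c. is_iso C c \<and> src C c = osum C (tgt C u) (tgt C v) \<and> tgt C c = tgt C w"
proof -
  define F where "F = msum C f g"
  have e3: "exact_tri C F w w'" using e3' unfolding F_def .
  obtain X Y X' Y' C1 C2 W where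
    d: "src C f = X" "tgt C f = Y" "src C g = X'" "tgt C g = Y'" "tgt C u = C1" "tgt C v = C2"
       "tgt C w = W" by blast
  note t1 = ex_tri[OF e1] and t2 = ex_tri[OF e2] and t3 = ex_tri[OF e3]
  have st[simp]: "src C f = X" "tgt C f = Y" "src C g = X'" "tgt C g = Y'"
    "src C u = Y" "tgt C u = C1" "src C u' = C1" "tgt C u' = shift_o C X"
    "src C v = Y'" "tgt C v = C2" "src C v' = C2" "tgt C v' = shift_o C X'"
    "src C F = osum C X X'" "tgt C F = osum C Y Y'"
    "src C w = osum C Y Y'" "tgt C w = W" "src C w' = W" "tgt C w' = shift_o C (osum C X X')"
    using d t1 t2 t3 unfolding F_def by simp_all
  have Fi: "F \<cdot> in1 C X X' = in1 C Y Y' \<cdot> f" "F \<cdot> in2 C X X' = in2 C Y Y' \<cdot> g"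
    "pr1 C Y Y' \<cdot> F = f \<cdot> pr1 C X X'" "pr2 C Y Y' \<cdot> F = g \<cdot> pr2 C X X'"
    using msum_in[of f g] d unfolding F_def by simp_all
  have "\<exists>c. tri_morphism C f u u' F w w' (in1 C X X') (in1 C Y Y') c"
    by (rule TR3[OF e1 e3]) (simp_all add: Fi)
  then obtain c1 where c1: "src C c1 = C1" "tgt C c1 = W" "c1 \<cdot> u = w \<cdot> in1 C Y Y'"
    "shift_m C (in1 C X X') \<cdot> u' = w' \<cdot> c1" unfolding tri_morphism_def by auto
  have "\<exists>c. tri_morphism C g v v' F w w' (in2 C X X') (in2 C Y Y') c"
    by (rule TR3[OF e2 e3]) (simp_all add: Fi)
  then obtain c2 where c2: "src C c2 = C2" "tgt C c2 = W" "c2 \<cdot> v = w \<cdot> in2 C Y Y'"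
    "shift_m C (in2 C X X') \<cdot> v' = w' \<cdot> c2" unfolding tri_morphism_def by auto
  have "\<exists>c. tri_morphism C F w w' f u u' (pr1 C X X') (pr1 C Y Y') c"
    by (rule TR3[OF e3 e1]) (simp_all add: Fi)
  then obtain d1 where d1: "src C d1 = W" "tgt C d1 = C1" "d1 \<cdot> w = u \<cdot> pr1 C Y Y'"
    "shift_m C (pr1 C X X') \<cdot> w' = u' \<cdot> d1" unfolding tri_morphism_def by auto
  have "\<exists>c. tri_morphism C F w w' g v v' (pr2 C X X') (pr2 C Y Y') c"
    by (rule TR3[OF e3 e2]) (simp_all add: Fi)
  then obtain d2 where d2: "src C d2 = W" "tgt C d2 = C2" "d2 \<cdot> w = v \<cdot> pr2 C Y Y'"
    "shift_m C (pr2 C X X') \<cdot> w' = v' \<cdot> d2" unfolding tri_morphism_def by auto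
  have stc[simp]: "src C c1 = C1" "tgt C c1 = W" "src C c2 = C2" "tgt C c2 = W"
    "src C d1 = W" "tgt C d1 = C1" "src C d2 = W" "tgt C d2 = C2"
    using c1 c2 d1 d2 by simp_all
  have rw[simp]: "c1 \<cdot> u = w \<cdot> in1 C Y Y'" "c2 \<cdot> v = w \<cdot> in2 C Y Y'"
    "d1 \<cdot> w = u \<cdot> pr1 C Y Y'" "d2 \<cdot> w = v \<cdot> pr2 C Y Y'"
    "w' \<cdot> c1 = shift_m C (in1 C X X') \<cdot> u'" "w' \<cdot> c2 = shift_m C (in2 C X X') \<cdot> v'"
    "u' \<cdot> d1 = shift_m C (pr1 C X X') \<cdot> w'" "v' \<cdot> d2 = shift_m C (pr2 C X X') \<cdot> w'"
    using c1 c2 d1 d2 by simp_all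
  have rwr[simp]:
    "\<And>z. tgt C z = Y \<Longrightarrow> c1 \<cdot> (u \<cdot> z) = w \<cdot> (in1 C Y Y' \<cdot> z)"
    "\<And>z. tgt C z = Y' \<Longrightarrow> c2 \<cdot> (v \<cdot> z) = w \<cdot> (in2 C Y Y' \<cdot> z)"
    "\<And>z. tgt C z = osum C Y Y' \<Longrightarrow> d1 \<cdot> (w \<cdot> z) = u \<cdot> (pr1 C Y Y' \<cdot> z)"
    "\<And>z. tgt C z = osum C Y Y' \<Longrightarrow> d2 \<cdot> (w \<cdot> z) = v \<cdot> (pr2 C Y Y' \<cdot> z)"
    "\<And>z. tgt C z = C1 \<Longrightarrow> w' \<cdot> (c1 \<cdot> z) = shift_m C (in1 C X X') \<cdot> (u' \<cdot> z)"
    "\<And>z. tgt C z = C2 \<Longrightarrow> w' \<cdot> (c2 \<cdot> z) = shift_m C (in2 C X X') \<cdot> (v' \<cdot> z)"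
    "\<And>z. tgt C z = W \<Longrightarrow> u' \<cdot> (d1 \<cdot> z) = shift_m C (pr1 C X X') \<cdot> (w' \<cdot> z)"
    "\<And>z. tgt C z = W \<Longrightarrow> v' \<cdot> (d2 \<cdot> z) = shift_m C (pr2 C X X') \<cdot> (w' \<cdot> z)"
    by (simp_all add: cmp_assoc)
  define c where "c = c1 \<cdot> pr1 C C1 C2 \<oplus> c2 \<cdot> pr2 C C1 C2"
  define dd where "dd = in1 C C1 C2 \<cdot> d1 \<oplus> in2 C C1 C2 \<cdot> d2"
  define S where "S = osum C C1 C2"
  have sc[simp]: "src C c = S" "tgt C c = W" "src C dd = W" "tgt C dd = S"
    unfolding c_def dd_def S_def by simp_all
  have sums[simp]: "S = osum C C1 C2" unfolding S_def ..
  define N where "N = dd \<cdot> c \<oplus> mneg C (ident C S)"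
  have sN[simp]: "src C N = S" "tgt C N = S" unfolding N_def by simp_all
  have Nk1: "(N \<cdot> in1 C C1 C2) \<cdot> u = mzero C Y S"
    unfolding N_def c_def dd_def by (simp add: cadd_l cadd_r assoc_r cneg_l cneg_r)
  have Nk2: "(N \<cdot> in2 C C1 C2) \<cdot> v = mzero C Y' S"
    unfolding N_def c_def dd_def by (simp add: cadd_l cadd_r assoc_r cneg_l cneg_r)
  obtain P1 where P1: "src C P1 = shift_o C X" "tgt C P1 = S" "N \<cdot> in1 C C1 C2 = P1 \<cdot> u'"
    using coker[OF rot[OF e1], of "N \<cdot> in1 C C1 C2"] Nk1 by auto
  obtain P2 where P2: "src C P2 = shift_o C X'" "tgt C P2 = S" "N \<cdot> in2 C C1 C2 = P2 \<cdot> v'"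
    using coker[OF rot[OF e2], of "N \<cdot> in2 C C1 C2"] Nk2 by auto
  have "N = N \<cdot> ident C S" by simp
  also have "\<dots> = N \<cdot> (in1 C C1 C2 \<cdot> pr1 C C1 C2 \<oplus> in2 C C1 C2 \<cdot> pr2 C C1 C2)"
    by (simp add: biprod_id)
  also have "\<dots> = (N \<cdot> in1 C C1 C2) \<cdot> pr1 C C1 C2 \<oplus> (N \<cdot> in2 C C1 C2) \<cdot> pr2 C C1 C2"
    by (simp add: cadd_r assoc)
  also have "\<dots> = P1 \<cdot> (u' \<cdot> pr1 C C1 C2) \<oplus> P2 \<cdot> (v' \<cdot> pr2 C C1 C2)"
    using P1 P2 by (simp add: assoc)
  finally have Ndec: "N = P1 \<cdot> (u' \<cdot> pr1 C C1 C2) \<oplus> P2 \<cdot> (v' \<cdot> pr2 C C1 C2)" .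
  have h1: "u' \<cdot> (pr1 C C1 C2 \<cdot> N) = mzero C S (shift_o C X)"
    unfolding N_def c_def dd_def by (simp add: cadd_l cadd_r assoc_r cneg_l cneg_r)
  have h2: "v' \<cdot> (pr2 C C1 C2 \<cdot> N) = mzero C S (shift_o C X')"
    unfolding N_def c_def dd_def by (simp add: cadd_l cadd_r assoc_r cneg_l cneg_r)
  have "N \<cdot> N = (P1 \<cdot> (u' \<cdot> pr1 C C1 C2) \<oplus> P2 \<cdot> (v' \<cdot> pr2 C C1 C2)) \<cdot> N"
    by (rule arg_cong[where f="\<lambda>t. t \<cdot> N"], rule Ndec)
  also have "\<dots> = P1 \<cdot> (u' \<cdot> (pr1 C C1 C2 \<cdot> N)) \<oplus> P2 \<cdot> (v' \<cdot> (pr2 C C1 C2 \<cdot> N))"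
    using P1 P2 by (simp add: cadd_l assoc_r)
  also have "\<dots> = mzero C S S" using P1 P2 h1 h2 by simp
  finally have NN: "N \<cdot> N = mzero C S S" .
  obtain y1 where y1: "src C y1 = S" "tgt C y1 = S" "y1 \<cdot> (dd \<cdot> c) = ident C S"
    using unip[of "dd \<cdot> c" S] NN unfolding N_def by auto
  define M where "M = c \<cdot> dd \<oplus> mneg C (ident C W)"
  have sM[simp]: "src C M = W" "tgt C M = W" unfolding M_def by simp_all
  have Mw: "M \<cdot> w = w \<cdot> (in1 C Y Y' \<cdot> pr1 C Y Y' \<oplus> in2 C Y Y' \<cdot> pr2 C Y Y') \<oplus> mneg C w"
    unfolding M_def c_def dd_def by (simp add: cadd_l cadd_r assoc_r cneg_l cneg_r)
  then have Mw0: "M \<cdot> w = mzero C (osum C Y Y') W" by (simp add: biprod_id)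
  obtain Q where Q: "src C Q = shift_o C (osum C X X')" "tgt C Q = W" "M = Q \<cdot> w'"
    using coker[OF rot[OF e3], of M] Mw0 by auto
  have wM: "w' \<cdot> M = shift_m C (in1 C X X' \<cdot> pr1 C X X' \<oplus> in2 C X X' \<cdot> pr2 C X X') \<cdot> w'
       \<oplus> mneg C w'"
    unfolding M_def c_def dd_def by (simp add: cadd_l cadd_r assoc_r cneg_l cneg_r sh_add sh_cmp)
  then have wM0: "w' \<cdot> M = mzero C W (shift_o C (osum C X X'))" by (simp add: biprod_id)
  have "M \<cdot> M = Q \<cdot> (w' \<cdot> M)"
    by (subst (1) Q(3)) (simp add: assoc_r Q)
  then have MM: "M \<cdot> M = mzero C W W" using wM0 Q by simp
  obtain y2 where y2: "src C y2 = W" "tgt C y2 = W" "(c \<cdot> dd) \<cdot> y2 = ident C W"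
    using unip[of "c \<cdot> dd" W] MM unfolding M_def by auto
  define L where "L = y1 \<cdot> dd"
  define R where "R = dd \<cdot> y2"
  have Lc: "L \<cdot> c = ident C S" unfolding L_def using y1 by (simp add: assoc_r)
  have cR: "c \<cdot> R = ident C W" unfolding R_def using y2 by (simp add: assoc)
  have sLR: "src C L = W" "tgt C L = S" "src C R = W" "tgt C R = S"
    unfolding L_def R_def using y1 y2 by simp_all
  have "L = L \<cdot> (c \<cdot> R)" using cR sLR by simp
  also have "\<dots> = (L \<cdot> c) \<cdot> R" using sLR by (simp add: assoc)
  also have "\<dots> = R" using Lc sLR by simp
  finally have LR: "L = R" .
  have "is_iso C c" unfolding is_iso_def
    by (rule exI[of _ L]) (use Lc cR LR sLR in simp)
  then show ?thesis using d by auto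
qed


lemma part2: assumes r: "object_rho C \<rho>"
  and cn: "\<forall>f. \<exists>g h. exact_tri C f g h \<and> tgt C g = cone f"
  shows "morphism_rho C (\<lambda>f. (\<rho> (src C f) + \<rho> (tgt C f) - \<rho> (cone f)) / 2)"
proof -
  have cr: "\<rho> (cone f) = \<rho> (tgt C g)" if e: "exact_tri C f g h" for f g h
  proof -
    obtain g' h' where e': "exact_tri C f g' h'" and tg: "tgt C g' = cone f" using cn by blast
    show ?thesis using cone_eq[OF r e e'] tg by simp
  qed
  have ex: "\<exists>g h. exact_tri C f g h" for f using cn by blast
  have nn: "0 \<le> (\<rho> (src C f) + \<rho> (tgt C f) - \<rho> (cone f)) / 2" for f
  proof -
    obtain g h where e: "exact_tri C f g h" using ex by blast
    note t = ex_tri[OF e]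
    have "\<rho> (tgt C g) \<le> \<rho> (src C g) + \<rho> (tgt C h)" using orho(4)[OF r rot[OF e]] by simp
    then show ?thesis using cr[OF e] t orho(2)[OF r] by simp
  qed
  have m1: "\<rho> (cone (shift_m C f)) = \<rho> (cone f)" for f
  proof -
    obtain g h where e: "exact_tri C f g h" using ex by blast
    have "exact_tri C (shift_m C f) (shift_m C g) (mneg C (shift_m C h))"
      using flip[OF rot[OF rot[OF rot[OF e]]]] by simp
    from cr[OF this] cr[OF e] show ?thesis using orho(2)[OF r] by simp
  qed
  have m2: "\<rho> (cone (msum C f g)) = \<rho> (cone f) + \<rho> (cone g)" for f g
  proof -
    obtain u u' where e1: "exact_tri C f u u'" using ex by blast
    obtain v v' where e2: "exact_tri C g v v'" using ex by blast
    obtain w w' where e3: "exact_tri C (msum C f g) w w'" using ex by blast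
    obtain c where c: "is_iso C c" "src C c = osum C (tgt C u) (tgt C v)" "tgt C c = tgt C w"
      using sum_cone[OF e1 e2 e3] by blast
    show ?thesis using iso_eq[OF r c(1)] c cr[OF e1] cr[OF e2] cr[OF e3] orho(3)[OF r] by simp
  qed
  have m3: "(\<rho> (src C f) + \<rho> (tgt C f) - \<rho> (cone f)) / 2 +
            (\<rho> (src C g) + \<rho> (tgt C g) - \<rho> (cone g)) / 2 = \<rho> (tgt C f)"
    if e: "exact_tri C f g h" for f g h
  proof -
    note t = ex_tri[OF e]
    show ?thesis using cr[OF e] cr[OF rot[OF e]] t orho(2)[OF r] by (simp add: field_simps)
  qed
  have cid: "\<rho> (cone (ident C X)) = 0" for X
  proof -
    obtain Z where z: "is_zero_obj C Z" using zero_obj_ex by blast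
    show ?thesis using cr[OF TR1_ident[OF z, of X]] rho_zero[OF r z] by simp
  qed
  have m3': "(\<rho> (src C f) + \<rho> (tgt C f) - \<rho> (cone f)) / 2 +
            (\<rho> (src C g) + \<rho> (tgt C g) - \<rho> (cone g)) / 2 =
            (\<rho> (src C (ident C (tgt C f))) + \<rho> (tgt C (ident C (tgt C f)))
              - \<rho> (cone (ident C (tgt C f)))) / 2"
    if e: "exact_tri C f g h" for f g h
    using m3[OF e] cid by simp
  have m1': "(\<rho> (src C (shift_m C f)) + \<rho> (tgt C (shift_m C f)) - \<rho> (cone (shift_m C f))) / 2
     = (\<rho> (src C f) + \<rho> (tgt C f) - \<rho> (cone f)) / 2" for f
    using m1[of f] orho(2)[OF r] by simp
  have m2': "(\<rho> (src C (msum C f g)) + \<rho> (tgt C (msum C f g)) - \<rho> (cone (msum C f g))) / 2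
     = (\<rho> (src C f) + \<rho> (tgt C f) - \<rho> (cone f)) / 2 +
       (\<rho> (src C g) + \<rho> (tgt C g) - \<rho> (cone g)) / 2" for f g
    using m2[of f g] orho(3)[OF r] by (simp add: field_simps)
  show ?thesis unfolding morphism_rho_def
    using nn m1' m2' m3' by blast
qed

end

theorem proposition2p4:
  fixes C :: "('o, 'm) tcat"
  assumes "triangulated_category C"
  shows "(\<forall>\<rho>. morphism_rho C \<rho> \<longrightarrow> object_rho C (\<lambda>X. \<rho> (ident C X))) \<and>
         (\<forall>\<rho> cone. object_rho C \<rho> \<and>
            (\<forall>f. \<exists>g h. exact_tri C f g h \<and> tgt C g = cone f) \<longrightarrow>
            morphism_rho C (\<lambda>f. (\<rho> (src C f) + \<rho> (tgt C f) - \<rho> (cone f)) / 2))"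
  using triangulated_category.part1[OF assms] triangulated_category.part2[OF assms] by blast

end
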